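(* Let $m,n$ be positive integers and $d=2^n$. For a positive integer $k$ let $\ket{b_k}\coloneqq 2^{-k/2}\sum_{i=0}^{2^k-1}\ket{i}\otimes\ket{i}\in\mathbb{C}^{2^k}\otimes\mathbb{C}^{2^k}$, where $\{\ket{i}\}$ is the computational basis. Let $U_p$ be any unitary operator on $\mathbb{C}^{2^m}\otimes\mathbb{C}^{2^n}$, and define the state on $\mathbb{C}^{2^m}\otimes\mathbb{C}^{2^m}\otimes\mathbb{C}^{2^n}\otimes\mathbb{C}^{2^n}$ $$\ket{\varphi}=\left(I_{2^m}\otimes U_p\otimes I_{2^n}\right)\left(\ket{b_m}\otimes\ket{b_n}\right),$$ where $U_p$ acts on the second and third tensor factors. Let $\rho=\operatorname{tr}_{A_2}\left(\ket{\varphi}\bra{\varphi}\right)$ be the density matrix on $\mathbb{C}^{2^n}\otimes\mathbb{C}^{2^n}$ obtained by tracing out the first two tensor factors $A_2=\mathbb{C}^{2^m}\otimes\mathbb{C}^{2^m}$. For $i,j\in\{0,\dots,d-1\}$ let $$p(i,j)\coloneqq 2^n\operatorname{tr}\left(\rho\,\ket{ij}\bra{ij}\right),$$ where $\ket{ij}=\ket{i}\otimes\ket{j}$ with $\ket{i},\ket{j}$ computational basis vectors of $\mathbb{C}^{2^n}$. Let $\{\mathbf{e}_i\}_{i=0}^{d-1}$ be the canonical basis of $\mathbb{R}^{d}$. Then the $d\times d$ matrix $$Q=\sum_{i,j=0}^{d-1}p(i,j)\,\mathbf{e}_i\mathbf{e}_j^\top$$ is doubly stochastic, i.e. $Q$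 has nonnegative real entries, $Q\mathbf{1}_d=\mathbf{1}_d$ and $Q^\top\mathbf{1}_d=\mathbf{1}_d$.
   Context: $\mathbf{1}_d$ denotes the all-ones vector in $\mathbb{R}^d$; $I_k$ the $k\times k$ identity matrix; $\operatorname{tr}_{A_2}$ the partial trace over subsystem $A_2$. *)

theory Defs
  imports "Jordan_Normal_Form.Matrix" Complex_Main
begin

definition ket :: "nat \<Rightarrow> nat \<Rightarrow> complex vec" where
  "ket d i = unit_vec d i"

definition vec_tensor :: "complex vec \<Rightarrow> complex vec \<Rightarrow> complex vec" where
  "vec_tensor v w = vec (dim_vec v * dim_vec w)
     (\<lambda>k. v $ (k div dim_vec w) * w $ (k mod dim_vec w))"

definition mat_tensor :: "complex mat \<Rightarrow> complex mat \<Rightarrow> complex mat" where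
  "mat_tensor A B = mat (dim_row A * dim_row B) (dim_col A * dim_col B)
     (\<lambda>(i,j). A $$ (i div dim_row B, j div dim_col B) * B $$ (i mod dim_row B, j mod dim_col B))"

definition adj :: "complex mat \<Rightarrow> complex mat" where
  "adj A = mat (dim_col A) (dim_row A) (\<lambda>(i,j). cnj (A $$ (j,i)))"

definition unitary :: "nat \<Rightarrow> complex mat \<Rightarrow> bool" where
  "unitary N U \<longleftrightarrow> U \<in> carrier_mat N N \<and> U * adj U = 1\<^sub>m N \<and> adj U * U = 1\<^sub>m N"

definition mtrace :: "complex mat \<Rightarrow> complex" where
  "mtrace A = (\<Sum>i<dim_row A. A $$ (i,i))"

definition outer :: "complex vec \<Rightarrow> complex mat" where
  "outer v = mat (dim_vec v) (dim_vec v) (\<lambda>(i,j). v $ i * cnj (v $ j))"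

definition bell :: "nat \<Rightarrow> complex vec" where
  "bell k = vec (2^k * 2^k)
     (\<lambda>x. complex_of_real (2 powr (- real k / 2)) *
          (\<Sum>i<2^k. (vec_tensor (ket (2^k) i) (ket (2^k) i)) $ x))"

definition ptrace_first :: "nat \<Rightarrow> nat \<Rightarrow> complex mat \<Rightarrow> complex mat" where
  "ptrace_first dA dB R = mat dB dB (\<lambda>(i,j). \<Sum>a<dA. R $$ (a * dB + i, a * dB + j))"

definition phi :: "nat \<Rightarrow> nat \<Rightarrow> complex mat \<Rightarrow> complex vec" where
  "phi m n U = mat_tensor (mat_tensor (1\<^sub>m (2^m)) U) (1\<^sub>m (2^n)) *\<^sub>v vec_tensor (bell m) (bell n)"

definition rho :: "nat \<Rightarrow> nat \<Rightarrow> complex mat \<Rightarrow> complex mat" where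
  "rho m n U = ptrace_first (2^m * 2^m) (2^n * 2^n) (outer (phi m n U))"

definition pdist :: "nat \<Rightarrow> nat \<Rightarrow> complex mat \<Rightarrow> nat \<Rightarrow> nat \<Rightarrow> complex" where
  "pdist m n U i j = 2^n * mtrace (rho m n U * outer (vec_tensor (ket (2^n) i) (ket (2^n) j)))"

text \<open>Q = sum_{i,j} p(i,j) e_i e_j^T, i.e. the d x d matrix with entries p(i,j).\<close>
definition Qmat :: "nat \<Rightarrow> nat \<Rightarrow> complex mat \<Rightarrow> complex mat" where
  "Qmat m n U = mat (2^n) (2^n) (\<lambda>(i,j). pdist m n U i j)"

definition ones :: "nat \<Rightarrow> complex vec" where
  "ones d = vec d (\<lambda>_. 1)"

definition doubly_stochastic :: "nat \<Rightarrow> complex mat \<Rightarrow> bool" where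
  "doubly_stochastic d Q \<longleftrightarrow> Q \<in> carrier_mat d d
     \<and> (\<forall>i<d. \<forall>j<d. Q $$ (i,j) \<in> \<real> \<and> Re (Q $$ (i,j)) \<ge> 0)
     \<and> Q *\<^sub>v ones d = ones d \<and> transpose_mat Q *\<^sub>v ones d = ones d"

end

theory Submission
  imports Defs
begin

lemma sum_split:
  fixes f :: "nat \<Rightarrow> 'a::comm_monoid_add"
  shows "(\<Sum>k<A*B. f k) = (\<Sum>i<A. \<Sum>j<B. f (i*B+j))"
proof -
  have "(\<Sum>k<A*B. f k) = (\<Sum>i<A. sum f {i*B..<i*B+B})"
    by (rule sum.nat_group[symmetric])
  also have "\<dots> = (\<Sum>i<A. \<Sum>j<B. f (i*B+j))"
  proof (rule sum.cong[OF refl])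
    fix i
    have "sum f {0+i*B..<B+i*B} = (\<Sum>j\<in>{0..<B}. f (j + i*B))"
      by (rule sum.shift_bounds_nat_ivl)
    then show "sum f {i*B..<i*B+B} = (\<Sum>j<B. f (i*B+j))"
      by (simp add: add.commute atLeast0LessThan)
  qed
  finally show ?thesis .
qed

lemma idx_bound:
  fixes i j A B :: nat
  assumes "i < A" "j < B"
  shows "i*B + j < A*B"
proof -
  have "i*B + j < (i+1)*B" using assms(2) by simp
  also have "(i+1)*B \<le> A*B" using assms(1) by (intro mult_right_mono) auto
  finally show ?thesis .
qed

lemma sum_delta_nat:
  fixes h :: "'a::comm_monoid_add"
  assumes "(a::nat) < K" "\<And>i. i < K \<Longrightarrow> g i = (if i = a then h else 0)"
  shows "(\<Sum>i<K. g i) = h"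
proof -
  have "(\<Sum>i<K. g i) = (\<Sum>i<K. (if i = a then h else 0))"
    using assms(2) by (intro sum.cong refl) simp
  also have "\<dots> = h" using assms(1) by (simp add: sum.delta)
  finally show ?thesis .
qed

lemma divmod_aux:
  fixes i k B :: nat
  assumes "k < B"
  shows "(i*B+k) div B = i" "(i*B+k) mod B = k"
  using assms by auto

lemma vec_tensor_index:
  assumes "i < dim_vec v" "j < dim_vec w"
  shows "vec_tensor v w $ (i * dim_vec w + j) = v $ i * w $ j"
proof -
  have "i * dim_vec w + j < dim_vec v * dim_vec w"
    using assms by (intro idx_bound)
  then show ?thesis using assms by (simp add: vec_tensor_def divmod_aux)
qed

lemma mat_tensor_index:
  assumes "i < dim_row A" "j < dim_col A" "k < dim_row B" "l < dim_col B"
  shows "mat_tensor A B $$ (i * dim_row B + k, j * dim_col B + l) = A $$ (i,j) * B $$ (k,l)"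
proof -
  have a: "i * dim_row B + k < dim_row A * dim_row B"
    using assms by (intro idx_bound)
  have b: "j * dim_col B + l < dim_col A * dim_col B"
    using assms by (intro idx_bound)
  show ?thesis using a b assms by (simp add: mat_tensor_def divmod_aux)
qed

lemma mat_tensor_mult_vec:
  assumes "i < dim_row A" "k < dim_row B" "dim_vec w = dim_col A * dim_col B"
  shows "(mat_tensor A B *\<^sub>v w) $ (i * dim_row B + k) =
    (\<Sum>j<dim_col A. \<Sum>l<dim_col B. A $$ (i,j) * B $$ (k,l) * w $ (j * dim_col B + l))"
proof -
  have a: "i * dim_row B + k < dim_row A * dim_row B"
    using assms by (intro idx_bound)
  have b: "\<And>j l. j < dim_col A \<Longrightarrow> l < dim_col B \<Longrightarrow> j * dim_col B + l < dim_col A * dim_col B"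
    by (rule idx_bound)
  have "(mat_tensor A B *\<^sub>v w) $ (i * dim_row B + k) =
     (\<Sum>x<dim_col A * dim_col B. mat_tensor A B $$ (i * dim_row B + k, x) * w $ x)"
    using a assms by (simp add: scalar_prod_def mat_tensor_def atLeast0LessThan)
  also have "\<dots> = (\<Sum>j<dim_col A. \<Sum>l<dim_col B. mat_tensor A B $$ (i * dim_row B + k, j * dim_col B + l) * w $ (j * dim_col B + l))"
    by (rule sum_split)
  also have "\<dots> = (\<Sum>j<dim_col A. \<Sum>l<dim_col B. A $$ (i,j) * B $$ (k,l) * w $ (j * dim_col B + l))"
    using assms by (intro sum.cong refl) (simp add: mat_tensor_index)
  finally show ?thesis .
qed

lemma dim_bell[simp]: "dim_vec (bell k) = 2^k * 2^k"
  by (simp add: bell_def)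

lemma bell_index:
  assumes "x < 2^k" "y < (2::nat)^k"
  shows "bell k $ (x * 2^k + y) = complex_of_real (2 powr (- real k / 2)) * (if x = y then 1 else 0)"
proof -
  have a: "x * 2^k + y < 2^k * 2^k"
    using assms by (intro idx_bound)
  have "\<And>i. i < 2^k \<Longrightarrow> vec_tensor (ket (2^k) i) (ket (2^k) i) $ (x * 2^k + y)
       = (if x = i then 1 else 0) * (if y = i then 1 else 0)"
    using vec_tensor_index[of x "ket (2^k) i" y "ket (2^k) i" for i] assms
    by (simp add: ket_def)
  then have "(\<Sum>i<2^k. vec_tensor (ket (2^k) i) (ket (2^k) i) $ (x * 2^k + y))
      = (\<Sum>i<2^k. (if x = i then 1 else 0) * (if y = i then 1 else 0))"
    by simp
  also have "\<dots> = (if x = y then 1 else 0)"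
    by (rule sum_delta_nat[OF assms(1)]) auto
  finally show ?thesis using a by (simp add: bell_def)
qed

lemma phi_index:
  fixes m n :: nat and U :: "complex mat"
  defines "M \<equiv> (2::nat)^m" and "N \<equiv> (2::nat)^n"
  assumes U: "U \<in> carrier_mat (M*N) (M*N)"
    and ab: "a < M" "b < M" and ce: "c < N" "e < N"
  shows "phi m n U $ (((a*M+b)*N+c)*N+e) =
     complex_of_real (2 powr (- real m / 2)) * complex_of_real (2 powr (- real n / 2)) * U $$ (b*N+c, a*N+e)"
proof -
  define X where "X = mat_tensor (1\<^sub>m M) U"
  define v where "v = vec_tensor (bell m) (bell n)"
  define sm where "sm = complex_of_real (2 powr (- real m / 2))"
  define sn where "sn = complex_of_real (2 powr (- real n / 2))"
  have dX: "dim_row X = M*(M*N)" "dim_col X = M*(M*N)" using U by (auto simp: X_def mat_tensor_def)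
  have dv: "dim_vec v = M*(M*N)*N" by (simp add: v_def vec_tensor_def M_def N_def)
  have bnd: "\<And>x y (B::nat) A. x < A \<Longrightarrow> y < B \<Longrightarrow> x * B + y < A * B"
    by (rule idx_bound)
  have p: "(a*M+b)*N+c = a*(M*N) + (b*N+c)" by (simp add: algebra_simps)
  have bc: "b*N+c < M*N" using bnd ab ce by blast
  have "phi m n U $ (((a*M+b)*N+c)*N+e) = (mat_tensor X (1\<^sub>m N) *\<^sub>v v) $ (((a*M+b)*N+c) * N + e)"
    by (simp add: phi_def X_def v_def M_def N_def)
  also have "(mat_tensor X (1\<^sub>m N) *\<^sub>v v) $ (((a*M+b)*N+c) * N + e) = (\<Sum>q<M*(M*N). \<Sum>l<N. X $$ ((a*M+b)*N+c, q) * 1\<^sub>m N $$ (e,l) * v $ (q * N + l))"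
  proof -
    have rowi: "(a*M+b)*N+c < dim_row X" by (subst p, subst dX(1), rule idx_bound[OF ab(1) bc])
    have h2: "e < dim_row (1\<^sub>m N :: complex mat)" using ce by simp
    have h3: "dim_vec v = dim_col X * dim_col (1\<^sub>m N :: complex mat)" using dv dX by simp
    show ?thesis using mat_tensor_mult_vec[OF rowi h2 h3] by (simp add: dX)
  qed
  also have "\<dots> = (\<Sum>q<M*(M*N). X $$ ((a*M+b)*N+c, q) * v $ (q * N + e))"
    using ce by (intro sum.cong refl sum_delta_nat[OF ce(2)]) auto
  also have "\<dots> = (\<Sum>q<M*(M*N). X $$ (a*(M*N) + (b*N+c), q) * v $ (q * N + e))"
    by (simp only: p)
  also have "\<dots> = (\<Sum>a'<M. \<Sum>r<M*N. X $$ (a*(M*N) + (b*N+c), a'*(M*N)+r) * v $ ((a'*(M*N)+r) * N + e))"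
    by (rule sum_split)
  also have "\<dots> = (\<Sum>a'<M. \<Sum>r<M*N. (if a = a' then 1 else 0) * U $$ (b*N+c, r) * v $ ((a'*(M*N)+r) * N + e))"
    using mat_tensor_index[of a "1\<^sub>m M" _ "b*N+c" U] U ab bc
    by (intro sum.cong refl) (simp add: X_def)
  also have "\<dots> = (\<Sum>r<M*N. U $$ (b*N+c, r) * v $ ((a*(M*N)+r) * N + e))"
    by (rule sum_delta_nat[OF ab(1)]) auto
  also have "\<dots> = (\<Sum>b'<M. \<Sum>c'<N. U $$ (b*N+c, b'*N+c') * v $ ((a*(M*N)+(b'*N+c')) * N + e))"
    by (rule sum_split)
  also have "\<dots> = (\<Sum>b'<M. \<Sum>c'<N. U $$ (b*N+c, b'*N+c') * (sm * (if a = b' then 1 else 0)) * (sn * (if c' = e then 1 else 0)))"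
  proof (intro sum.cong refl)
    fix b' c' assume b': "b' \<in> {..<M}" and c': "c' \<in> {..<N}"
    have i: "(a*(M*N)+(b'*N+c')) * N + e = (a*M+b') * dim_vec (bell n) + (c'*N+e)"
      by (simp add: algebra_simps N_def)
    have "v $ ((a*(M*N)+(b'*N+c')) * N + e) = bell m $ (a*M+b') * bell n $ (c'*N+e)"
      unfolding i v_def
      by (rule vec_tensor_index) (use bnd ab b' c' ce in \<open>auto simp: M_def N_def\<close>)
    also have "\<dots> = (sm * (if a = b' then 1 else 0)) * (sn * (if c' = e then 1 else 0))"
      using bell_index[of a m b'] bell_index[of c' n e] ab b' c' ce
      by (simp add: M_def N_def sm_def sn_def)
    finally show "U $$ (b*N+c, b'*N+c') * v $ ((a*(M*N)+(b'*N+c')) * N + e) =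
      U $$ (b*N+c, b'*N+c') * (sm * (if a = b' then 1 else 0)) * (sn * (if c' = e then 1 else 0))"
      by simp
  qed
  also have "\<dots> = (\<Sum>b'<M. (if b' = a then sm * sn * U $$ (b*N+c, b'*N+e) else 0))"
    using ce by (intro sum.cong refl sum_delta_nat[OF ce(2)]) auto
  also have "\<dots> = sm * sn * U $$ (b*N+c, a*N+e)"
    using ab by (simp add: sum.delta)
  finally show ?thesis by (simp add: sm_def sn_def)
qed

lemma ket_tensor_index:
  assumes "i < N" "j < N" "s < N*N"
  shows "vec_tensor (ket N i) (ket N j) $ s = (if s = i*N+j then 1 else 0)"
proof -
  have N: "N > 0" using assms by auto
  have "s div N < N" using assms by (simp add: less_mult_imp_div_less)
  moreover have "s mod N < N" using N by simp
  moreover have "(s div N = i \<and> s mod N = j) = (s = i*N+j)"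
  proof
    assume "s div N = i \<and> s mod N = j"
    then show "s = i*N+j" using div_mult_mod_eq[of s N] by simp
  next
    assume "s = i*N+j"
    then show "s div N = i \<and> s mod N = j" using assms(2) by (simp add: divmod_aux)
  qed
  ultimately show ?thesis using assms by (auto simp: vec_tensor_def ket_def)
qed

lemma mtrace_outer_unit:
  assumes R: "R \<in> carrier_mat D D" and t: "t < D"
    and w: "dim_vec w = D" "\<And>s. s < D \<Longrightarrow> w $ s = (if s = t then 1 else 0)"
  shows "mtrace (R * outer w) = R $$ (t,t)"
proof -
  have "mtrace (R * outer w) = (\<Sum>r<D. \<Sum>s<D. R $$ (r,s) * (w $ s * cnj (w $ r)))"
    using R w by (simp add: mtrace_def scalar_prod_def outer_def atLeast0LessThan)
  also have "\<dots> = (\<Sum>r<D. \<Sum>s<D. R $$ (r,s) * ((if s = t then 1 else 0) * (if r = t then 1 else 0)))"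
    using w by (intro sum.cong refl) simp
  also have "\<dots> = (\<Sum>r<D. (if r = t then R $$ (r,t) else 0))"
    using t by (intro sum.cong refl sum_delta_nat[OF t]) auto
  also have "\<dots> = R $$ (t,t)"
    using t by (simp add: sum.delta)
  finally show ?thesis .
qed

lemma scal_sq:
  "complex_of_real (2 powr (- real k / 2)) * cnj (complex_of_real (2 powr (- real k / 2)))
    = complex_of_real (1 / 2^k)"
proof -
  have "(2::real) powr (- real k / 2) * 2 powr (- real k / 2) = 2 powr (- real k)"
    by (simp add: powr_add[symmetric])
  also have "\<dots> = 1 / 2^k" by (simp add: powr_minus powr_realpow divide_inverse)
  finally show ?thesis by (simp flip: of_real_mult)
qed

lemma pdist_formula:
  fixes m n :: nat and U :: "complex mat"
  defines "M \<equiv> (2::nat)^m" and "N \<equiv> (2::nat)^n"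
  assumes U: "U \<in> carrier_mat (M*N) (M*N)" and ij: "i < N" "j < N"
  shows "pdist m n U i j = complex_of_real
     ((1 / real M) * (\<Sum>a<M. \<Sum>b<M. (cmod (U $$ (b*N+i, a*N+j)))^2))"
proof -
  define sm where "sm = complex_of_real (2 powr (- real m / 2))"
  define sn where "sn = complex_of_real (2 powr (- real n / 2))"
  have bnd: "\<And>x y (B::nat) A. x < A \<Longrightarrow> y < B \<Longrightarrow> x * B + y < A * B"
    by (rule idx_bound)
  have t: "i*N+j < N*N" using bnd ij by blast
  have R: "rho m n U \<in> carrier_mat (N*N) (N*N)" by (simp add: rho_def ptrace_first_def N_def)
  have dphi: "dim_vec (phi m n U) = M*(M*N)*N"
    using U by (simp add: phi_def mat_tensor_def M_def N_def)
  have "mtrace (rho m n U * outer (vec_tensor (ket (2^n) i) (ket (2^n) j))) = rho m n U $$ (i*N+j, i*N+j)"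
    by (rule mtrace_outer_unit[OF R t]) (use ij t ket_tensor_index[of i N j] in \<open>auto simp: vec_tensor_def ket_def N_def\<close>)
  also have "\<dots> = (\<Sum>x<M*M. phi m n U $ (x*(N*N) + (i*N+j)) * cnj (phi m n U $ (x*(N*N) + (i*N+j))))"
  proof -
    have "\<And>x. x < M*M \<Longrightarrow> x*(N*N) + (i*N+j) < M*(M*N)*N"
    proof -
      fix x :: nat assume "x < M*M"
      then have "x*(N*N) + (i*N+j) < (M*M)*(N*N)" using t by (rule idx_bound)
      moreover have "(M*M)*(N*N) = M*(M*N)*N" by (simp add: ac_simps)
      ultimately show "x*(N*N) + (i*N+j) < M*(M*N)*N" by simp
    qed
    then show ?thesis using t dphi
      by (simp add: rho_def ptrace_first_def outer_def M_def N_def algebra_simps)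
  qed
  also have "\<dots> = (\<Sum>a<M. \<Sum>b<M. phi m n U $ (((a*M+b)*N+i)*N+j) * cnj (phi m n U $ (((a*M+b)*N+i)*N+j)))"
    by (subst sum_split) (simp add: algebra_simps)
  also have "\<dots> = (\<Sum>a<M. \<Sum>b<M. (sm * cnj sm) * (sn * cnj sn) * (U $$ (b*N+i, a*N+j) * cnj (U $$ (b*N+i, a*N+j))))"
    using phi_index[where m=m and n=n and U=U] U ij
    by (intro sum.cong refl) (simp add: M_def N_def sm_def sn_def algebra_simps)
  also have "\<dots> = (sm * cnj sm) * (sn * cnj sn) * (\<Sum>a<M. \<Sum>b<M. U $$ (b*N+i, a*N+j) * cnj (U $$ (b*N+i, a*N+j)))"
    by (simp only: sum_distrib_left)
  also have "\<dots> = complex_of_real (1 / 2^m) * complex_of_real (1 / 2^n) *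
      complex_of_real (\<Sum>a<M. \<Sum>b<M. (cmod (U $$ (b*N+i, a*N+j)))^2)"
    unfolding sm_def sn_def scal_sq by (simp only: of_real_sum complex_norm_square)
  finally show ?thesis
    by (simp add: pdist_def M_def N_def flip: of_real_mult) 
qed

lemma row_norm:
  assumes "unitary D U" "r < D"
  shows "(\<Sum>c<D. (cmod (U $$ (r,c)))^2) = 1"
proof -
  have U: "U \<in> carrier_mat D D" "U * adj U = 1\<^sub>m D" using assms(1) by (auto simp: unitary_def)
  have "(U * adj U) $$ (r,r) = (\<Sum>c<D. U $$ (r,c) * cnj (U $$ (r,c)))"
    using U(1) assms(2) by (simp add: scalar_prod_def adj_def atLeast0LessThan)
  moreover have "(U * adj U) $$ (r,r) = 1" using U assms(2) by simp
  moreover have "complex_of_real (\<Sum>c<D. (cmod (U $$ (r,c)))^2) = (\<Sum>c<D. U $$ (r,c) * cnj (U $$ (r,c)))"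
    by (simp only: of_real_sum complex_norm_square)
  ultimately have "complex_of_real (\<Sum>c<D. (cmod (U $$ (r,c)))^2) = 1" by simp
  then show ?thesis by (metis of_real_eq_1_iff)
qed

lemma col_norm:
  assumes "unitary D U" "c < D"
  shows "(\<Sum>r<D. (cmod (U $$ (r,c)))^2) = 1"
proof -
  have U: "U \<in> carrier_mat D D" "adj U * U = 1\<^sub>m D" using assms(1) by (auto simp: unitary_def)
  have "(adj U * U) $$ (c,c) = (\<Sum>r<D. U $$ (r,c) * cnj (U $$ (r,c)))"
    using U(1) assms(2) by (simp add: scalar_prod_def adj_def atLeast0LessThan mult.commute)
  moreover have "(adj U * U) $$ (c,c) = 1" using U assms(2) by simp
  moreover have "complex_of_real (\<Sum>r<D. (cmod (U $$ (r,c)))^2) = (\<Sum>r<D. U $$ (r,c) * cnj (U $$ (r,c)))"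
    by (simp only: of_real_sum complex_norm_square)
  ultimately have "complex_of_real (\<Sum>r<D. (cmod (U $$ (r,c)))^2) = 1" by simp
  then show ?thesis by (metis of_real_eq_1_iff)
qed

theorem lemma2:
  fixes m n :: nat and U :: "complex mat"
  assumes "m > 0" and "n > 0"
    and "unitary (2^m * 2^n) U"
  shows "doubly_stochastic (2^n) (Qmat m n U)"
proof -
  define M where "M = (2::nat)^m"
  define N where "N = (2::nat)^n"
  have Uu: "unitary (M*N) U" using assms(3) by (simp add: M_def N_def)
  have U: "U \<in> carrier_mat (M*N) (M*N)" using Uu by (simp add: unitary_def)
  have M0: "real M > 0" by (simp add: M_def)
  define f where "f i j = (\<Sum>a<M. \<Sum>b<M. (cmod (U $$ (b*N+i, a*N+j)))^2)" for i j
  have Q: "\<And>i j. i < N \<Longrightarrow> j < N \<Longrightarrow> Qmat m n U $$ (i,j) = complex_of_real ((1 / real M) * f i j)"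
    using pdist_formula[of U m n] U by (simp add: Qmat_def f_def M_def N_def)
  have rows: "(\<Sum>j<N. f i j) = real M" if i: "i < N" for i
  proof -
    have "(\<Sum>j<N. f i j) = (\<Sum>j<N. \<Sum>a<M. \<Sum>b<M. (cmod (U $$ (b*N+i, a*N+j)))^2)"
      unfolding f_def by simp
    also have "\<dots> = (\<Sum>a<M. \<Sum>j<N. \<Sum>b<M. (cmod (U $$ (b*N+i, a*N+j)))^2)"
      by (rule sum.swap)
    also have "\<dots> = (\<Sum>a<M. \<Sum>b<M. \<Sum>j<N. (cmod (U $$ (b*N+i, a*N+j)))^2)"
      by (intro sum.cong refl sum.swap)
    also have "\<dots> = (\<Sum>b<M. \<Sum>a<M. \<Sum>j<N. (cmod (U $$ (b*N+i, a*N+j)))^2)"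
      by (rule sum.swap)
    also have "\<dots> = (\<Sum>b<M. \<Sum>c<M*N. (cmod (U $$ (b*N+i, c)))^2)"
      by (simp only: sum_split)
    also have "\<dots> = (\<Sum>b<M. 1)"
    proof (intro sum.cong refl)
      fix b assume "b \<in> {..<M}"
      then have "b*N+i < M*N" using i
        by (intro idx_bound) auto
      then show "(\<Sum>c<M*N. (cmod (U $$ (b*N+i, c)))^2) = 1" by (rule row_norm[OF Uu])
    qed
    finally show ?thesis by simp
  qed
  have cols: "(\<Sum>i<N. f i j) = real M" if j: "j < N" for j
  proof -
    have "(\<Sum>i<N. f i j) = (\<Sum>i<N. \<Sum>a<M. \<Sum>b<M. (cmod (U $$ (b*N+i, a*N+j)))^2)"
      unfolding f_def by simp
    also have "\<dots> = (\<Sum>a<M. \<Sum>i<N. \<Sum>b<M. (cmod (U $$ (b*N+i, a*N+j)))^2)"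
      by (rule sum.swap)
    also have "\<dots> = (\<Sum>a<M. \<Sum>b<M. \<Sum>i<N. (cmod (U $$ (b*N+i, a*N+j)))^2)"
      by (intro sum.cong refl sum.swap)
    also have "\<dots> = (\<Sum>a<M. \<Sum>r<M*N. (cmod (U $$ (r, a*N+j)))^2)"
      by (simp only: sum_split)
    also have "\<dots> = (\<Sum>a<M. 1)"
    proof (intro sum.cong refl)
      fix a assume "a \<in> {..<M}"
      then have "a*N+j < M*N" using j
        by (intro idx_bound) auto
      then show "(\<Sum>r<M*N. (cmod (U $$ (r, a*N+j)))^2) = 1" by (rule col_norm[OF Uu])
    qed
    finally show ?thesis by simp
  qed
  have car: "Qmat m n U \<in> carrier_mat N N" by (simp add: Qmat_def N_def)
  have ent: "\<forall>i<N. \<forall>j<N. Qmat m n U $$ (i,j) \<in> \<real> \<and> Re (Qmat m n U $$ (i,j)) \<ge> 0"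
  proof (intro allI impI conjI)
    fix i j assume ij: "i < N" "j < N"
    then have eq: "Qmat m n U $$ (i,j) = complex_of_real ((1 / real M) * f i j)" by (rule Q)
    have nn: "0 \<le> (1 / real M) * f i j" unfolding f_def by (intro mult_nonneg_nonneg sum_nonneg) auto
    show "Qmat m n U $$ (i,j) \<in> \<real>" unfolding eq by (rule Reals_of_real)
    show "Re (Qmat m n U $$ (i,j)) \<ge> 0" unfolding eq Re_complex_of_real by (rule nn)
  qed
  have rs: "Qmat m n U *\<^sub>v ones N = ones N"
  proof (rule eq_vecI)
    fix i assume "i < dim_vec (ones N)"
    then have i: "i < N" by (simp add: ones_def)
    have "(Qmat m n U *\<^sub>v ones N) $ i = (\<Sum>j<N. Qmat m n U $$ (i,j))"
      using car i by (simp add: scalar_prod_def ones_def atLeast0LessThan)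
    also have "\<dots> = (\<Sum>j<N. complex_of_real ((1 / real M) * f i j))"
      using i by (intro sum.cong refl Q) auto
    also have "\<dots> = complex_of_real ((1 / real M) * (\<Sum>j<N. f i j))"
      by (simp only: of_real_sum sum_distrib_left)
    also have "\<dots> = 1" using rows[OF i] M0 by simp
    finally show "(Qmat m n U *\<^sub>v ones N) $ i = ones N $ i" using i by (simp add: ones_def)
  qed (use car in \<open>simp add: ones_def\<close>)
  have cs: "transpose_mat (Qmat m n U) *\<^sub>v ones N = ones N"
  proof (rule eq_vecI)
    fix j assume "j < dim_vec (ones N)"
    then have j: "j < N" by (simp add: ones_def)
    have "(transpose_mat (Qmat m n U) *\<^sub>v ones N) $ j = (\<Sum>i<N. Qmat m n U $$ (i,j))"
      using car j by (simp add: scalar_prod_def ones_def atLeast0LessThan)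
    also have "\<dots> = (\<Sum>i<N. complex_of_real ((1 / real M) * f i j))"
      using j by (intro sum.cong refl Q) auto
    also have "\<dots> = complex_of_real ((1 / real M) * (\<Sum>i<N. f i j))"
      by (simp only: of_real_sum sum_distrib_left)
    also have "\<dots> = 1" using cols[OF j] M0 by simp
    finally show "(transpose_mat (Qmat m n U) *\<^sub>v ones N) $ j = ones N $ j" using j by (simp add: ones_def)
  qed (use car in \<open>simp add: ones_def\<close>)
  show ?thesis using car ent rs cs by (simp add: doubly_stochastic_def N_def)
qed

end
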